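(* Let $\Sigma=[\sigma_{hk}]$ be a $p\times p$ Hermitian positive definite complex matrix and $\alpha=(n_1,m_1,\dots,n_p,m_p)\in\mathbb Z_{\ge0}^{2p}$ with $N=\{h:n_h\neq0\}$, $M=\{k:m_k\neq0\}$, $S^N_h=\{k\in M:\sigma_{hk}\neq0\}$ ($h\in N$), $S^M_k=\{h\in N:\sigma_{hk}\neq0\}$ ($k\in M$). Then the moments of $\mathcal{CN}_p(\Sigma)$ satisfy $$\nu(\alpha)=\sum_{k\in S^N_h}m_k\,\sigma_{hk}\,\nu(\alpha^-_{hk})\ \text{ for each }h\in N,\qquad \nu(\alpha)=\sum_{h\in S^M_k}n_h\,\sigma_{hk}\,\nu(\alpha^-_{hk})\ \text{ for each }k\in M,$$ where $\alpha^-_{hk}=\alpha-e_{2h-1}-e_{2k}$ (an empty sum being $0$).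
   Context: $\mathcal{CN}_p(\Sigma)$ has density $\varphi(z;\Sigma)=\frac{1}{\pi^p\det\Sigma}\exp(-z^*\Sigma^{-1}z)$ on $\mathbb C^p\cong\mathbb R^{2p}$; $\nu(\alpha)=\int_{\mathbb C^p}\prod_{j=1}^p z_j^{n_j}\bar z_j^{m_j}\varphi(z;\Sigma)\,dz$; $(e_j)$ is the canonical basis of $\mathbb R^{2p}$. *)

theory Defs
  imports "HOL-Analysis.Analysis"
begin

text \<open>The measure \<open>lborel\<close> on
  \<open>complex^'p\<close> is Lebesgue measure on C^p identified with R^(2p).\<close>

definition hermitian_mat :: "complex^'p^'p \<Rightarrow> bool" where
  "hermitian_mat S \<longleftrightarrow> (\<forall>i j. S $ i $ j = cnj (S $ j $ i))"

definition herm_form :: "complex^'p^'p \<Rightarrow> complex^'p \<Rightarrow> complex" where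
  "herm_form S z = (\<Sum>i\<in>UNIV. \<Sum>j\<in>UNIV. cnj (z $ i) * S $ i $ j * z $ j)"

definition pos_def_mat :: "complex^'p^'p \<Rightarrow> bool" where
  "pos_def_mat S \<longleftrightarrow> hermitian_mat S \<and> (\<forall>z. z \<noteq> 0 \<longrightarrow> Re (herm_form S z) > 0)"

definition cn_density :: "complex^'p^'p \<Rightarrow> complex^'p \<Rightarrow> complex" where
  "cn_density S z = exp (- herm_form (matrix_inv S) z) / (of_real (pi ^ CARD('p)) * det S)"

text \<open>Moment nu(alpha) with alpha = (n_1,m_1,...,n_p,m_p) given by n, m.\<close>
definition cn_moment :: "complex^'p^'p \<Rightarrow> ('p \<Rightarrow> nat) \<Rightarrow> ('p \<Rightarrow> nat) \<Rightarrow> complex" where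
  "cn_moment S n m = (LINT z|lborel. (\<Prod>j\<in>UNIV. (z $ j) ^ n j * cnj (z $ j) ^ m j) * cn_density S z)"

end

theory Submission
  imports Defs "HOL-Probability.Probability"
begin

definition pb :: "('a::real_normed_vector \<Rightarrow> complex) \<Rightarrow> bool" where
  "pb f \<longleftrightarrow> continuous_on UNIV f \<and> (\<exists>C d. \<forall>z. norm (f z) \<le> C * (1 + norm z) ^ d)"

lemma pb_const: "pb (\<lambda>z. c)"
proof -
  have "\<forall>z. norm c \<le> norm c * (1 + norm z) ^ 0" by simp
  then show ?thesis unfolding pb_def by (blast intro: continuous_on_const)
qed

lemma pb_add: assumes "pb f" "pb g" shows "pb (\<lambda>z. f z + g z)"
proof -
  from assms obtain C1 d1 C2 d2 where b1: "\<forall>z. norm (f z) \<le> C1 * (1 + norm z) ^ d1"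
    and b2: "\<forall>z. norm (g z) \<le> C2 * (1 + norm z) ^ d2"
    and c: "continuous_on UNIV f" "continuous_on UNIV g" unfolding pb_def by blast
  have "norm (f z + g z) \<le> (C1 + C2) * (1 + norm z) ^ (d1 + d2)" for z
  proof -
    have C1: "C1 \<ge> 0" using b1[rule_format, of 0] by (smt (verit) norm_ge_zero zero_le_mult_iff zero_less_power)
    have C2: "C2 \<ge> 0" using b2[rule_format, of 0] by (smt (verit) norm_ge_zero zero_le_mult_iff zero_less_power)
    have p1: "(1 + norm z) ^ d1 \<le> (1 + norm z) ^ (d1 + d2)" by (intro power_increasing) auto
    have p2: "(1 + norm z) ^ d2 \<le> (1 + norm z) ^ (d1 + d2)" by (intro power_increasing) auto
    have "norm (f z + g z) \<le> norm (f z) + norm (g z)" by (rule norm_triangle_ineq)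
    also have "\<dots> \<le> C1 * (1 + norm z) ^ d1 + C2 * (1 + norm z) ^ d2" using b1 b2 by (meson add_mono)
    also have "\<dots> \<le> C1 * (1 + norm z) ^ (d1 + d2) + C2 * (1 + norm z) ^ (d1 + d2)"
      using p1 p2 C1 C2 by (meson add_mono mult_left_mono)
    finally show ?thesis by (simp add: algebra_simps)
  qed
  then show ?thesis using c unfolding pb_def by (auto intro!: continuous_intros)
qed

lemma pb_mult: assumes "pb f" "pb g" shows "pb (\<lambda>z. f z * g z)"
proof -
  from assms obtain C1 d1 C2 d2 where b1: "\<forall>z. norm (f z) \<le> C1 * (1 + norm z) ^ d1"
    and b2: "\<forall>z. norm (g z) \<le> C2 * (1 + norm z) ^ d2"
    and c: "continuous_on UNIV f" "continuous_on UNIV g" unfolding pb_def by blast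
  have "norm (f z * g z) \<le> (C1 * C2) * (1 + norm z) ^ (d1 + d2)" for z
  proof -
    have "norm (f z * g z) = norm (f z) * norm (g z)" by (simp add: norm_mult)
    also have "\<dots> \<le> (C1 * (1 + norm z) ^ d1) * (C2 * (1 + norm z) ^ d2)"
      using b1 b2 by (meson mult_mono norm_ge_zero order.trans)
    finally show ?thesis by (simp add: algebra_simps power_add)
  qed
  then show ?thesis using c unfolding pb_def by (auto intro!: continuous_intros)
qed

lemma pb_sum: "finite I \<Longrightarrow> (\<And>i. i \<in> I \<Longrightarrow> pb (f i)) \<Longrightarrow> pb (\<lambda>z. \<Sum>i\<in>I. f i z)"
  by (induction I rule: finite_induct) (auto intro: pb_add pb_const)

lemma pb_prod: "finite I \<Longrightarrow> (\<And>i. i \<in> I \<Longrightarrow> pb (f i)) \<Longrightarrow> pb (\<lambda>z. \<Prod>i\<in>I. f i z)"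
  by (induction I rule: finite_induct) (auto intro: pb_mult pb_const)

lemma pb_power: "pb f \<Longrightarrow> pb (\<lambda>z. f z ^ k)"
  by (induction k) (auto intro: pb_mult pb_const)

lemma pb_nth: "pb (\<lambda>z::complex^'p. z $ j)"
  unfolding pb_def
proof (intro conjI exI allI)
  show "continuous_on UNIV (\<lambda>z::complex^'p. z $ j)"
    by (intro linear_continuous_on bounded_linear_vec_nth)
  fix z :: "complex^'p"
  show "norm (z $ j) \<le> 1 * (1 + norm z) ^ 1" using Finite_Cartesian_Product.norm_nth_le[of z j] by simp
qed

lemma pb_cnj: "pb f \<Longrightarrow> pb (\<lambda>z. cnj (f z))"
  unfolding pb_def by (auto intro!: continuous_intros)

lemma gauss_int:
  fixes a :: real assumes a: "a > 0"
  shows "integrable lborel (\<lambda>z::'a::euclidean_space. exp (- a * norm z ^ 2))"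
proof -
  define s where "s = sqrt (1 / (2 * a))"
  have s_pos: "s > 0" using a by (simp add: s_def)
  have s2: "2 * s ^ 2 = 1 / a" using a by (simp add: s_def)
  have eq1: "exp (- a * x ^ 2) = sqrt (2 * pi * s ^ 2) * normal_density 0 s x" for x
  proof -
    have "- (x - 0)\<^sup>2 / (2 * s\<^sup>2) = - a * x ^ 2" using a by (simp add: s2 mult.commute)
    moreover have "sqrt (2 * pi * s ^ 2) > 0" using s_pos by simp
    ultimately show ?thesis unfolding normal_density_def using s_pos by simp
  qed
  have i1: "integrable lborel (\<lambda>x::real. exp (- a * x ^ 2))"
    unfolding eq1 by (intro integrable_mult_right integrable_normal_density) (use s_pos in simp)
  have fin1: "(\<integral>\<^sup>+x. ennreal (exp (- a * x ^ 2)) \<partial>lborel) < \<infinity>"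
    using i1 by (simp add: integrable_iff_bounded)
  have eq2: "exp (- (a * norm z ^ 2)) = (\<Prod>b\<in>Basis. exp (- (a * (z \<bullet> b) ^ 2)))" for z :: 'a
  proof -
    have "norm z ^ 2 = (\<Sum>b\<in>Basis. (z \<bullet> b) ^ 2)"
      unfolding power2_norm_eq_inner by (subst euclidean_inner) (simp add: power2_eq_square)
    then show ?thesis by (simp add: exp_sum[symmetric] sum_distrib_left sum_negf)
  qed
  have "(\<integral>\<^sup>+z. ennreal (norm (exp (- a * norm (z::'a) ^ 2))) \<partial>lborel)
      = (\<integral>\<^sup>+z. (\<Prod>b\<in>Basis. ennreal (exp (- a * ((z::'a) \<bullet> b) ^ 2))) \<partial>lborel)"
    using eq2 by (simp add: prod_ennreal abs_prod)
  also have "\<dots> = (\<Prod>b\<in>(Basis::'a set). (\<integral>\<^sup>+x. ennreal (exp (- a * x ^ 2)) \<partial>lborel))"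
    by (rule nn_integral_lborel_prod) auto
  also have "\<dots> < \<infinity>" using fin1 by (simp add: power_less_top_ennreal)
  finally show ?thesis by (simp add: integrable_iff_bounded)
qed

lemma pow_le_fact_exp:
  fixes x :: real assumes "x \<ge> 0"
  shows "x ^ n \<le> fact n * exp x"
proof -
  have s: "summable (\<lambda>k. x ^ k /\<^sub>R fact k)" using exp_converges summable_def by blast
  have "x ^ n /\<^sub>R fact n = (\<Sum>k\<in>{n}. x ^ k /\<^sub>R fact k)" by simp
  also have "\<dots> \<le> (\<Sum>k. x ^ k /\<^sub>R fact k)"
    by (rule sum_le_suminf[OF s]) (use assms in auto)
  also have "\<dots> = exp x" using exp_converges sums_unique by metis
  finally have "x ^ n / fact n \<le> exp x" by (simp add: divide_inverse mult.commute)
  then show ?thesis by (simp add: divide_le_eq mult.commute)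
qed

lemma poly_gauss_bound:
  fixes r c :: real assumes "r \<ge> 0" "c > 0"
  shows "(1 + r) ^ d * exp (- c * r ^ 2) \<le> (fact d * exp (1 + 1 / (2 * c))) * exp (- (c / 2) * r ^ 2)"
proof -
  have "(1 + r) ^ d * exp (- c * r ^ 2) \<le> (fact d * exp (1 + r)) * exp (- c * r ^ 2)"
    using pow_le_fact_exp[of "1 + r" d] assms by (intro mult_right_mono) auto
  also have "\<dots> = fact d * exp (1 + r - c * r ^ 2)" by (simp add: mult.assoc flip: exp_add)
  also have "\<dots> \<le> fact d * exp (1 + 1 / (2 * c) - (c / 2) * r ^ 2)"
  proof -
    have "0 \<le> (c * r - 1) ^ 2 / (2 * c)" using assms by simp
    also have "(c * r - 1) ^ 2 / (2 * c) = (c / 2) * r ^ 2 - r + 1 / (2 * c)"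
      using assms by (simp add: field_simps power2_eq_square)
    finally have "r - c * r ^ 2 \<le> 1 / (2 * c) - (c / 2) * r ^ 2" by simp
    then show ?thesis by (intro mult_left_mono) auto
  qed
  also have "\<dots> = (fact d * exp (1 + 1 / (2 * c))) * exp (- (c / 2) * r ^ 2)"
    by (simp add: exp_add[symmetric] exp_diff exp_minus field_simps)
  finally show ?thesis .
qed

lemma int_pb_gauss:
  fixes f E :: "'a::euclidean_space \<Rightarrow> complex"
  assumes "pb f" "continuous_on UNIV E" "c > 0" "\<And>z. norm (E z) \<le> exp (- c * norm z ^ 2)"
  shows "integrable lborel (\<lambda>z. f z * E z)"
proof -
  obtain C d where fb: "\<And>z. norm (f z) \<le> C * (1 + norm z) ^ d" and fc: "continuous_on UNIV f"
    using assms(1) unfolding pb_def by blast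
  have C: "C \<ge> 0" using fb[of 0] by (smt (verit) norm_ge_zero zero_le_mult_iff zero_less_power)
  define K where "K = C * (fact d * exp (1 + 1 / (2 * c)))"
  have gi: "integrable lborel (\<lambda>z::'a. K * exp (- (c / 2) * norm z ^ 2))"
    using gauss_int[of "c / 2"] assms(3) by (intro integrable_mult_right) auto
  show ?thesis
  proof (rule Bochner_Integration.integrable_bound[OF gi])
    show "(\<lambda>z. f z * E z) \<in> borel_measurable lborel"
      using fc assms(2) by (simp add: borel_measurable_continuous_onI continuous_on_mult)
    show "AE z in lborel. norm (f z * E z) \<le> norm (K * exp (- (c / 2) * norm z ^ 2))"
    proof (intro AE_I2)
      fix z :: 'a
      have "norm (f z * E z) = norm (f z) * norm (E z)" by (simp add: norm_mult)
      also have "\<dots> \<le> (C * (1 + norm z) ^ d) * exp (- c * norm z ^ 2)"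
        using fb[of z] assms(4)[of z] by (meson mult_mono norm_ge_zero order.trans)
      also have "\<dots> = C * ((1 + norm z) ^ d * exp (- c * norm z ^ 2))" by simp
      also have "\<dots> \<le> C * ((fact d * exp (1 + 1 / (2 * c))) * exp (- (c / 2) * norm z ^ 2))"
        using poly_gauss_bound[of "norm z" c d] assms(3) C by (intro mult_left_mono) auto
      also have "\<dots> = norm (K * exp (- (c / 2) * norm z ^ 2))"
        using C by (simp add: K_def abs_mult)
      finally show "norm (f z * E z) \<le> norm (K * exp (- (c / 2) * norm z ^ 2))" .
    qed
  qed
qed

lemma shift_integral:
  fixes f :: "'a::euclidean_space \<Rightarrow> 'b::{banach, second_countable_topology}"
  assumes "f \<in> borel_measurable borel"
  shows "(\<integral>z. f (z + c) \<partial>lborel) = integral\<^sup>L lborel f"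
proof -
  have "integral\<^sup>L lborel f = integral\<^sup>L (distr lborel borel ((+) c)) f"
    by (simp add: lborel_distr_plus)
  also have "\<dots> = (\<integral>z. f (c + z) \<partial>lborel)"
    using assms by (intro integral_distr) auto
  finally show ?thesis by (simp add: add.commute)
qed

lemma shift_integrable:
  fixes f :: "'a::euclidean_space \<Rightarrow> 'b::{banach, second_countable_topology}"
  assumes "integrable lborel f"
  shows "integrable lborel (\<lambda>z. f (z + c))"
proof -
  have m: "f \<in> borel_measurable borel" using assms by auto
  have "integrable (distr lborel borel ((+) c)) f" using assms by (simp add: lborel_distr_plus)
  then have "integrable lborel (\<lambda>z. f (c + z))"
    using m by (subst (asm) integrable_distr_eq) auto
  then show ?thesis by (simp add: add.commute)
qed

lemma ibp_dir:
  fixes g :: "'a::euclidean_space \<Rightarrow> complex" and Dg :: "'a \<Rightarrow> 'a \<Rightarrow> complex"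
  assumes deriv: "\<And>w. (g has_derivative Dg w) (at w)"
    and cont: "continuous_on UNIV (\<lambda>w. Dg w v)"
    and ig: "integrable lborel g" and iD: "integrable lborel (\<lambda>w. Dg w v)"
  shows "(\<integral>w. Dg w v \<partial>lborel) = 0"
proof -
  define h where "h = (\<lambda>w. Dg w v)"
  have hm[measurable]: "h \<in> borel_measurable borel"
    unfolding h_def using cont by (rule borel_measurable_continuous_onI)
  have gm[measurable]: "g \<in> borel_measurable borel" using ig by auto
  have hc: "continuous_on UNIV h" using cont by (simp add: h_def)
  have ih: "integrable lborel h" using iD by (simp add: h_def)
  have lin: "Dg w (c *\<^sub>R x) = c *\<^sub>R Dg w x" for w c x
    using has_derivative_linear[OF deriv[of w]] by (simp add: linear_iff)
  have ftc: "(\<integral>s. indicator {0..1} s *\<^sub>R h (z + s *\<^sub>R v) \<partial>lborel) = g (z + v) - g z" for z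
  proof -
    have "interval_lebesgue_integral lborel (ereal 0) (ereal 1) (\<lambda>s. h (z + s *\<^sub>R v)) = g (z + 1 *\<^sub>R v) - g (z + 0 *\<^sub>R v)"
    proof (rule interval_integral_FTC_finite[where F = "\<lambda>s. g (z + s *\<^sub>R v)"])
      show "continuous_on {min 0 1..max 0 1} (\<lambda>s. h (z + s *\<^sub>R v))"
        by (rule continuous_on_compose2[OF hc]) (auto intro!: continuous_intros)
      fix s :: real
      have d1: "((\<lambda>s. z + s *\<^sub>R v) has_derivative (\<lambda>x. x *\<^sub>R v)) (at s within {min 0 1..max 0 1})"
        by (auto intro!: derivative_eq_intros)
      have "((\<lambda>s. g (z + s *\<^sub>R v)) has_derivative (\<lambda>x. Dg (z + s *\<^sub>R v) (x *\<^sub>R v))) (at s within {min 0 1..max 0 1})"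
        by (rule has_derivative_compose[OF d1 deriv])
      then show "((\<lambda>s. g (z + s *\<^sub>R v)) has_vector_derivative h (z + s *\<^sub>R v)) (at s within {min 0 1..max (0::real) 1})"
        unfolding has_vector_derivative_def h_def by (simp add: lin)
    qed
    then show ?thesis
      by (simp add: interval_integral_Icc set_lebesgue_integral_def)
  qed
  define F where "F s z = indicator {0..1::real} s *\<^sub>R h (z + s *\<^sub>R v)" for s z
  have Fm: "case_prod F \<in> borel_measurable (lborel \<Otimes>\<^sub>M lborel)"
    unfolding F_def by measurable
  have inner_norm: "(\<integral>z. norm (F s z) \<partial>lborel) = indicator {0..1} s * (\<integral>z. norm (h z) \<partial>lborel)" for s
  proof -
    have "(\<integral>z. norm (F s z) \<partial>lborel) = (\<integral>z. indicator {0..1} s * norm (h (z + s *\<^sub>R v)) \<partial>lborel)"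
      by (simp add: F_def)
    also have "\<dots> = indicator {0..1} s * (\<integral>z. norm (h (z + s *\<^sub>R v)) \<partial>lborel)" by simp
    also have "(\<integral>z. norm (h (z + s *\<^sub>R v)) \<partial>lborel) = (\<integral>z. norm (h z) \<partial>lborel)"
      by (rule shift_integral[where f = "\<lambda>z. norm (h z)"]; measurable)
    finally show ?thesis .
  qed
  have i1: "integrable lborel (\<lambda>s. \<integral>z. norm (F s z) \<partial>lborel)"
    unfolding inner_norm by (auto intro!: integrable_mult_left integrable_real_indicator)
  have i2: "AE s in lborel. integrable lborel (\<lambda>z. F s z)"
    unfolding F_def using shift_integrable[OF ih] by (intro AE_I2 integrable_scaleR_right) auto
  have intF: "integrable (lborel \<Otimes>\<^sub>M lborel) (case_prod F)"
    by (rule lborel_pair.Fubini_integrable[OF Fm]) (use i1 i2 in simp_all)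
  have "(\<integral>z. (\<integral>s. F s z \<partial>lborel) \<partial>lborel) = (\<integral>s. (\<integral>z. F s z \<partial>lborel) \<partial>lborel)"
    by (rule lborel_pair.Fubini_integral[OF intF])
  moreover have "(\<integral>z. (\<integral>s. F s z \<partial>lborel) \<partial>lborel) = 0"
  proof -
    have "(\<integral>z. (\<integral>s. F s z \<partial>lborel) \<partial>lborel) = (\<integral>z. g (z + v) - g z \<partial>lborel)"
      using ftc by (simp add: F_def)
    also have "\<dots> = (\<integral>z. g (z + v) \<partial>lborel) - (\<integral>z. g z \<partial>lborel)"
      by (rule Bochner_Integration.integral_diff[OF shift_integrable[OF ig] ig])
    also have "(\<integral>z. g (z + v) \<partial>lborel) = (\<integral>z. g z \<partial>lborel)"
      by (rule shift_integral) measurable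
    finally show ?thesis by simp
  qed
  moreover have "(\<integral>s. (\<integral>z. F s z \<partial>lborel) \<partial>lborel) = (\<integral>w. h w \<partial>lborel)"
  proof -
    have "(\<integral>s. (\<integral>z. F s z \<partial>lborel) \<partial>lborel) = (\<integral>s. indicator {0..1::real} s *\<^sub>R (\<integral>w. h w \<partial>lborel) \<partial>lborel)"
    proof -
      have eqs: "(\<integral>z. F s z \<partial>lborel) = indicator {0..1} s *\<^sub>R (\<integral>w. h w \<partial>lborel)" for s :: real
      proof -
        have "(\<integral>z. F s z \<partial>lborel) = indicator {0..1} s *\<^sub>R (\<integral>z. h (z + s *\<^sub>R v) \<partial>lborel)"
          by (simp add: F_def)
        also have "(\<integral>z. h (z + s *\<^sub>R v) \<partial>lborel) = (\<integral>w. h w \<partial>lborel)"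
          by (rule shift_integral; measurable)
        finally show ?thesis .
      qed
      show ?thesis by (simp only: eqs)
    qed
    also have "\<dots> = (\<integral>s. (indicator {0..1::real} s :: real) \<partial>lborel) *\<^sub>R (\<integral>w. h w \<partial>lborel)"
      by (rule integral_scaleR_left) auto
    also have "(\<integral>s. (indicator {0..1::real} s :: real) \<partial>lborel) = 1" by simp
    finally show ?thesis by simp
  qed
  ultimately show ?thesis by (simp add: h_def)
qed

definition mono_f :: "('p \<Rightarrow> nat) \<Rightarrow> ('p \<Rightarrow> nat) \<Rightarrow> complex^'p \<Rightarrow> complex" where
  "mono_f n m z = (\<Prod>j\<in>UNIV. (z $ j) ^ n j * cnj (z $ j) ^ m j)"

definition DP :: "('p \<Rightarrow> nat) \<Rightarrow> ('p \<Rightarrow> nat) \<Rightarrow> complex^'p \<Rightarrow> complex^'p \<Rightarrow> complex" where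
  "DP n m w u = (\<Sum>j\<in>UNIV. of_nat (n j) * u $ j * mono_f (n(j := n j - 1)) m w
                  + of_nat (m j) * cnj (u $ j) * mono_f n (m(j := m j - 1)) w)"

definition DQ :: "complex^'p^'p \<Rightarrow> complex^'p \<Rightarrow> complex^'p \<Rightarrow> complex" where
  "DQ A w u = (\<Sum>i\<in>UNIV. \<Sum>j\<in>UNIV. cnj (u $ i) * A $ i $ j * w $ j + cnj (w $ i) * A $ i $ j * u $ j)"

lemma mono_remove:
  "mono_f n m w = (w $ j) ^ n j * cnj (w $ j) ^ m j *
     (\<Prod>i\<in>UNIV - {j}. (w $ i) ^ n i * cnj (w $ i) ^ m i)"
  unfolding mono_f_def by (rule prod.remove) auto

lemma rest_upd:
  "(\<Prod>i\<in>UNIV - {j}. (w $ i) ^ (n(j := k)) i * cnj (w $ i) ^ (m(j := l)) i) =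
   (\<Prod>i\<in>UNIV - {j}. (w $ i) ^ n i * cnj (w $ i) ^ m i)"
  by (rule prod.cong) auto

lemma mono_upd_n:
  "mono_f (n(j := k)) m w = (w $ j) ^ k * cnj (w $ j) ^ m j *
     (\<Prod>i\<in>UNIV - {j}. (w $ i) ^ n i * cnj (w $ i) ^ m i)"
  using mono_remove[of "n(j := k)" m w j] rest_upd[of w n j k m "m j"] by simp

lemma mono_upd_m:
  "mono_f n (m(j := k)) w = (w $ j) ^ n j * cnj (w $ j) ^ k *
     (\<Prod>i\<in>UNIV - {j}. (w $ i) ^ n i * cnj (w $ i) ^ m i)"
  using mono_remove[of n "m(j := k)" w j] rest_upd[of w n j "n j" m k] by simp

lemma has_derivative_nth: "((\<lambda>z::complex^'p. z $ i) has_derivative (\<lambda>u. u $ i)) (at w)"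
  by (rule bounded_linear.has_derivative[OF bounded_linear_vec_nth has_derivative_ident])

lemma deriv_mono: "(mono_f n m has_derivative DP n m w) (at w)"
proof -
  show ?thesis
    apply (rule has_derivative_eq_rhs)
     apply (unfold mono_f_def)
     apply (rule has_derivative_prod)
     apply (rule has_derivative_mult)
      apply (rule has_derivative_power)
      apply (rule has_derivative_nth)
     apply (rule has_derivative_power)
     apply (rule has_derivative_cnj)
     apply (rule has_derivative_nth)
    apply (rule ext)
    apply (unfold DP_def mono_upd_n mono_upd_m)
    apply (rule sum.cong[OF refl])
    apply (simp add: algebra_simps)
    done
qed

definition gE :: "complex^'p^'p \<Rightarrow> complex^'p \<Rightarrow> complex" where
  "gE A z = exp (- herm_form A z)"

lemma deriv_herm: "(herm_form A has_derivative DQ A w) (at w)"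
  apply (rule has_derivative_eq_rhs)
   apply (unfold herm_form_def[abs_def])
   apply (rule has_derivative_sum)+
   apply (rule has_derivative_mult)
    apply (rule has_derivative_mult)
     apply (rule has_derivative_cnj)
     apply (rule has_derivative_nth)
    apply (rule has_derivative_const)
   apply (rule has_derivative_nth)
  apply (rule ext)
  apply (unfold DQ_def)
  apply (simp add: algebra_simps sum.distrib)
  done

lemma deriv_gE: "(gE A has_derivative (\<lambda>u. - DQ A w u * gE A w)) (at w)"
  apply (rule has_derivative_eq_rhs)
   apply (unfold gE_def[abs_def])
   apply (rule has_derivative_compose[where g = exp])
    apply (rule has_derivative_minus)
    apply (rule deriv_herm)
   apply (rule DERIV_exp[unfolded has_field_derivative_def])
  apply (simp add: fun_eq_iff)
  done

lemma deriv_g: "((\<lambda>z. mono_f n m z * gE A z) has_derivative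
   (\<lambda>u. (DP n m w u - mono_f n m w * DQ A w u) * gE A w)) (at w)"
  apply (rule has_derivative_eq_rhs)
   apply (rule has_derivative_mult)
    apply (rule deriv_mono)
   apply (rule deriv_gE)
  apply (rule ext)
  apply (simp add: algebra_simps)
  done

lemma cont_of_deriv: "(\<And>w. (f has_derivative f' w) (at w)) \<Longrightarrow> continuous_on UNIV f"
  by (meson continuous_at_imp_continuous_on has_derivative_continuous)

lemma pb_diff: "pb f \<Longrightarrow> pb g \<Longrightarrow> pb (\<lambda>z. f z - g z)"
proof -
  assume "pb f" "pb g"
  then have "pb (\<lambda>z. f z + (-1) * g z)" by (intro pb_add pb_mult pb_const)
  then show ?thesis by simp
qed

lemma pb_mono: "pb (mono_f n m)"
proof -
  have "pb (\<lambda>z. \<Prod>j\<in>UNIV. (z $ j) ^ n j * cnj (z $ j) ^ m j)"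
    by (intro pb_prod pb_mult pb_power pb_cnj pb_nth) auto
  then show ?thesis unfolding mono_f_def[abs_def] .
qed

lemma pb_DP: "pb (\<lambda>w. DP n m w u)"
  unfolding DP_def by (intro pb_sum pb_add pb_mult pb_const pb_mono) auto

lemma pb_DQ: "pb (\<lambda>w. DQ A w u)"
  unfolding DQ_def by (intro pb_sum pb_add pb_mult pb_const pb_nth pb_cnj) auto

lemma gE_cont: "continuous_on UNIV (gE A)"
  using deriv_gE by (rule cont_of_deriv)

locale coercive =
  fixes A :: "complex^'p^'p" and c :: real
  assumes c_pos: "c > 0" and coer: "\<And>z. Re (herm_form A z) \<ge> c * norm z ^ 2"
begin

lemma gE_bound: "norm (gE A z) \<le> exp (- c * norm z ^ 2)"
  using coer[of z] by (simp add: gE_def)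

lemma int_pb: "pb f \<Longrightarrow> integrable lborel (\<lambda>z. f z * gE A z)"
  by (rule int_pb_gauss[OF _ gE_cont c_pos gE_bound])

lemma ibp_main:
  "(\<integral>w. DP n m w u * gE A w \<partial>lborel) = (\<integral>w. mono_f n m w * DQ A w u * gE A w \<partial>lborel)"
proof -
  have i1: "integrable lborel (\<lambda>w. DP n m w u * gE A w)" by (intro int_pb pb_DP)
  have i2: "integrable lborel (\<lambda>w. mono_f n m w * DQ A w u * gE A w)"
    by (intro int_pb pb_mult pb_mono pb_DQ)
  have "(\<integral>w. (DP n m w u - mono_f n m w * DQ A w u) * gE A w \<partial>lborel) = 0"
  proof (rule ibp_dir[where g = "\<lambda>z. mono_f n m z * gE A z"])
    show "\<And>w. ((\<lambda>z. mono_f n m z * gE A z) has_derivative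
           (\<lambda>u. (DP n m w u - mono_f n m w * DQ A w u) * gE A w)) (at w)"
      by (rule deriv_g)
    show "continuous_on UNIV (\<lambda>w. (DP n m w u - mono_f n m w * DQ A w u) * gE A w)"
      using pb_DP[of n m u] pb_mono[of n m] pb_DQ[of A u] gE_cont[of A]
      unfolding pb_def by (auto intro!: continuous_intros)
    show "integrable lborel (\<lambda>z. mono_f n m z * gE A z)" by (intro int_pb pb_mono)
    show "integrable lborel (\<lambda>w. (DP n m w u - mono_f n m w * DQ A w u) * gE A w)"
      by (intro int_pb pb_diff pb_mult pb_mono pb_DQ pb_DP)
  qed
  moreover have "(\<integral>w. (DP n m w u - mono_f n m w * DQ A w u) * gE A w \<partial>lborel)
      = (\<integral>w. DP n m w u * gE A w \<partial>lborel) - (\<integral>w. mono_f n m w * DQ A w u * gE A w \<partial>lborel)"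
    unfolding left_diff_distrib by (rule Bochner_Integration.integral_diff[OF i1 i2])
  ultimately show ?thesis by simp
qed

end

lemma sum_axis:
  fixes f :: "'b::finite \<Rightarrow> complex"
  shows "(\<Sum>j\<in>UNIV. f j * (axis k x $ j)) = f k * x"
proof -
  have "(\<Sum>j\<in>UNIV. f j * (axis k x $ j)) = (\<Sum>j\<in>UNIV. if j = k then f j * x else 0)"
    by (rule sum.cong) (auto simp: axis_def)
  also have "\<dots> = f k * x" by simp
  finally show ?thesis .
qed

lemma sum_axis_cnj:
  fixes f :: "'b::finite \<Rightarrow> complex"
  shows "(\<Sum>j\<in>UNIV. f j * cnj (axis k x $ j)) = f k * cnj x"
proof -
  have "(\<Sum>j\<in>UNIV. f j * cnj (axis k x $ j)) = (\<Sum>j\<in>UNIV. if j = k then f j * cnj x else 0)"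
    by (rule sum.cong) (auto simp: axis_def)
  also have "\<dots> = f k * cnj x" by simp
  finally show ?thesis .
qed

lemma DP_axis:
  "DP n m w (axis k x) = of_nat (n k) * x * mono_f (n(k := n k - 1)) m w
     + of_nat (m k) * cnj x * mono_f n (m(k := m k - 1)) w"
proof -
  have "DP n m w (axis k x) = (\<Sum>j\<in>UNIV. (of_nat (n j) * mono_f (n(j := n j - 1)) m w) * (axis k x $ j))
     + (\<Sum>j\<in>UNIV. (of_nat (m j) * mono_f n (m(j := m j - 1)) w) * cnj (axis k x $ j))"
    unfolding DP_def sum.distrib[symmetric] by (rule sum.cong) (auto simp: algebra_simps)
  also have "\<dots> = of_nat (n k) * x * mono_f (n(k := n k - 1)) m w
     + of_nat (m k) * cnj x * mono_f n (m(k := m k - 1)) w"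
    unfolding sum_axis sum_axis_cnj by (simp add: algebra_simps)
  finally show ?thesis .
qed

definition Aw :: "complex^'p^'p \<Rightarrow> complex^'p \<Rightarrow> 'p \<Rightarrow> complex" where
  "Aw A w k = (\<Sum>j\<in>UNIV. A $ k $ j * w $ j)"

definition wA :: "complex^'p^'p \<Rightarrow> complex^'p \<Rightarrow> 'p \<Rightarrow> complex" where
  "wA A w k = (\<Sum>i\<in>UNIV. cnj (w $ i) * A $ i $ k)"

lemma DQ_axis:
  "DQ A w (axis k x) = cnj x * Aw A w k + x * wA A w k"
proof -
  have "DQ A w (axis k x) = (\<Sum>i\<in>UNIV. (\<Sum>j\<in>UNIV. A $ i $ j * w $ j) * cnj (axis k x $ i))
      + (\<Sum>j\<in>UNIV. (\<Sum>i\<in>UNIV. cnj (w $ i) * A $ i $ j) * (axis k x $ j))"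
    unfolding DQ_def sum.distrib sum_distrib_right
    by (subst (2) sum.swap) (simp add: algebra_simps)
  also have "\<dots> = cnj x * Aw A w k + x * wA A w k"
    unfolding sum_axis sum_axis_cnj Aw_def wA_def by (simp add: algebra_simps)
  finally show ?thesis .
qed

lemma pb_Aw: "pb (\<lambda>w. Aw A w k)"
  unfolding Aw_def by (intro pb_sum pb_mult pb_const pb_nth) auto

lemma pb_wA: "pb (\<lambda>w. wA A w k)"
  unfolding wA_def by (intro pb_sum pb_mult pb_const pb_nth pb_cnj) auto

lemma lin2:
  fixes f1 f2 :: "'a \<Rightarrow> complex"
  assumes "integrable M f1" "integrable M f2"
  shows "(\<integral>w. a * f1 w + b * f2 w \<partial>M) = a * integral\<^sup>L M f1 + b * integral\<^sup>L M f2"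
  using assms by (subst Bochner_Integration.integral_add) auto

context coercive
begin

lemma W1:
  "(\<integral>w. of_nat (m k) * mono_f n (m(k := m k - 1)) w * gE A w \<partial>lborel)
   = (\<integral>w. mono_f n m w * Aw A w k * gE A w \<partial>lborel)"
proof -
  let ?u1 = "axis k (1::complex)" and ?u2 = "axis k \<i>"
  have iP: "integrable lborel (\<lambda>w. DP n m w u * gE A w)" for u by (intro int_pb pb_DP)
  have iQ: "integrable lborel (\<lambda>w. mono_f n m w * DQ A w u * gE A w)" for u
    by (intro int_pb pb_mult pb_mono pb_DQ)
  have "(\<integral>w. of_nat (m k) * mono_f n (m(k := m k - 1)) w * gE A w \<partial>lborel)
      = (\<integral>w. (1/2) * (DP n m w ?u1 * gE A w) + (\<i>/2) * (DP n m w ?u2 * gE A w) \<partial>lborel)"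
    by (rule Bochner_Integration.integral_cong[OF refl]) (simp add: DP_axis algebra_simps)
  also have "\<dots> = (1/2) * (\<integral>w. mono_f n m w * DQ A w ?u1 * gE A w \<partial>lborel)
      + (\<i>/2) * (\<integral>w. mono_f n m w * DQ A w ?u2 * gE A w \<partial>lborel)"
    by (simp only: lin2[OF iP iP] ibp_main)
  also have "\<dots> = (\<integral>w. (1/2) * (mono_f n m w * DQ A w ?u1 * gE A w) + (\<i>/2) * (mono_f n m w * DQ A w ?u2 * gE A w) \<partial>lborel)"
    by (simp only: lin2[OF iQ iQ])
  also have "\<dots> = (\<integral>w. mono_f n m w * Aw A w k * gE A w \<partial>lborel)"
    by (rule Bochner_Integration.integral_cong[OF refl]) (simp add: DQ_axis algebra_simps)
  finally show ?thesis .
qed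

lemma W2:
  "(\<integral>w. of_nat (n k) * mono_f (n(k := n k - 1)) m w * gE A w \<partial>lborel)
   = (\<integral>w. mono_f n m w * wA A w k * gE A w \<partial>lborel)"
proof -
  let ?u1 = "axis k (1::complex)" and ?u2 = "axis k \<i>"
  have iP: "integrable lborel (\<lambda>w. DP n m w u * gE A w)" for u by (intro int_pb pb_DP)
  have iQ: "integrable lborel (\<lambda>w. mono_f n m w * DQ A w u * gE A w)" for u
    by (intro int_pb pb_mult pb_mono pb_DQ)
  have "(\<integral>w. of_nat (n k) * mono_f (n(k := n k - 1)) m w * gE A w \<partial>lborel)
      = (\<integral>w. (1/2) * (DP n m w ?u1 * gE A w) + (-\<i>/2) * (DP n m w ?u2 * gE A w) \<partial>lborel)"
    by (rule Bochner_Integration.integral_cong[OF refl]) (simp add: DP_axis algebra_simps)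
  also have "\<dots> = (1/2) * (\<integral>w. mono_f n m w * DQ A w ?u1 * gE A w \<partial>lborel)
      + (-\<i>/2) * (\<integral>w. mono_f n m w * DQ A w ?u2 * gE A w \<partial>lborel)"
    by (simp only: lin2[OF iP iP] ibp_main)
  also have "\<dots> = (\<integral>w. (1/2) * (mono_f n m w * DQ A w ?u1 * gE A w) + (-\<i>/2) * (mono_f n m w * DQ A w ?u2 * gE A w) \<partial>lborel)"
    by (simp only: lin2[OF iQ iQ])
  also have "\<dots> = (\<integral>w. mono_f n m w * wA A w k * gE A w \<partial>lborel)"
    by (rule Bochner_Integration.integral_cong[OF refl]) (simp add: DQ_axis algebra_simps)
  finally show ?thesis .
qed

end

lemma herm_form_mv: "herm_form M z = (\<Sum>i\<in>UNIV. cnj (z $ i) * (M *v z) $ i)"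
  unfolding herm_form_def matrix_vector_mult_def
  by (simp add: sum_distrib_left mult.assoc)

lemma pd_invertible:
  assumes "pos_def_mat S" shows "invertible S"
proof -
  have "\<forall>x. S *v x = 0 \<longrightarrow> x = 0"
  proof (intro allI impI)
    fix x assume "S *v x = 0"
    then have "herm_form S x = 0" by (simp add: herm_form_mv)
    then show "x = 0" using assms unfolding pos_def_mat_def by force
  qed
  then show ?thesis
    unfolding invertible_left_inverse by (simp add: matrix_left_invertible_ker)
qed

lemma inv_props:
  assumes "invertible S"
  shows "S ** matrix_inv S = mat 1" "matrix_inv S ** S = mat 1"
proof -
  have "\<exists>A'. S ** A' = mat 1 \<and> A' ** S = mat 1" using assms unfolding invertible_def .
  then have "S ** matrix_inv S = mat 1 \<and> matrix_inv S ** S = mat 1"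
    unfolding matrix_inv_def by (rule someI_ex)
  then show "S ** matrix_inv S = mat 1" "matrix_inv S ** S = mat 1" by auto
qed

lemma herm_scale: "herm_form A (r *\<^sub>R z) = complex_of_real (r ^ 2) * herm_form A z"
  unfolding herm_form_def vector_scaleR_component
  by (simp add: sum_distrib_left scaleR_conv_of_real power2_eq_square algebra_simps)

lemma inv_pos:
  assumes "pos_def_mat S" "z \<noteq> 0"
  shows "Re (herm_form (matrix_inv S) z) > 0"
proof -
  let ?A = "matrix_inv S"
  define w where "w = ?A *v z"
  have SA: "S ** ?A = mat 1" using inv_props[OF pd_invertible[OF assms(1)]] by auto
  have Sw: "S *v w = z" unfolding w_def by (simp add: matrix_vector_mul_assoc SA)
  have "w \<noteq> 0" using Sw assms(2) by auto
  then have pos: "Re (herm_form S w) > 0" using assms(1) unfolding pos_def_mat_def by auto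
  have "herm_form S w = (\<Sum>i\<in>UNIV. cnj (w $ i) * z $ i)" by (simp add: herm_form_mv Sw)
  moreover have "herm_form ?A z = (\<Sum>i\<in>UNIV. cnj (z $ i) * w $ i)" by (simp add: herm_form_mv w_def)
  ultimately have "herm_form ?A z = cnj (herm_form S w)" by (simp add: mult.commute)
  then show ?thesis using pos by simp
qed

lemma exists_coercive:
  assumes "pos_def_mat S"
  shows "\<exists>c. coercive (matrix_inv S) c"
proof -
  let ?A = "matrix_inv S"
  let ?q = "\<lambda>z. Re (herm_form ?A z)"
  have cq: "continuous_on UNIV ?q"
    using cont_of_deriv[OF deriv_herm[of ?A]] by (intro continuous_intros) auto
  define v :: "complex^'a" where "v = axis undefined 1"
  have v0: "v \<noteq> 0" unfolding v_def by (metis axis_nth zero_index zero_neq_one)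
  have "v /\<^sub>R norm v \<in> sphere 0 1" using v0 by simp
  then have ne: "sphere (0::complex^'a) 1 \<noteq> {}" by blast
  obtain z0 where z0: "z0 \<in> sphere 0 1" and zmin: "\<And>y. y \<in> sphere 0 1 \<Longrightarrow> ?q z0 \<le> ?q y"
    using continuous_attains_inf[OF compact_sphere ne continuous_on_subset[OF cq]] by blast
  define c where "c = ?q z0"
  have "z0 \<noteq> 0" using z0 by auto
  then have cpos: "c > 0" unfolding c_def using inv_pos[OF assms] by blast
  have "c * norm z ^ 2 \<le> ?q z" for z
  proof (cases "z = 0")
    case True then show ?thesis by (simp add: herm_form_def)
  next
    case False
    let ?y = "z /\<^sub>R norm z"
    have "?y \<in> sphere 0 1" using False by simp
    then have "c \<le> ?q ?y" using zmin c_def by blast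
    moreover have "z = norm z *\<^sub>R ?y" using False by simp
    then have "herm_form ?A z = complex_of_real (norm z ^ 2) * herm_form ?A ?y"
      using herm_scale[of ?A "norm z" ?y] by metis
    then have "?q z = norm z ^ 2 * ?q ?y" by simp
    ultimately show ?thesis by (metis mult.commute mult_left_mono zero_le_power2)
  qed
  then show ?thesis using cpos unfolding coercive_def by blast
qed

lemma mono_split_n:
  assumes "n h \<noteq> 0"
  shows "mono_f n m w = w $ h * mono_f (n(h := n h - 1)) m w"
proof -
  have e: "(w $ h) ^ n h = w $ h * (w $ h) ^ (n h - 1)"
    using assms by (metis Suc_pred' not_gr_zero power_Suc)
  show ?thesis unfolding mono_upd_n mono_remove[of n m w h] e by (simp add: mult.assoc)
qed

lemma mono_split_m:
  assumes "m k \<noteq> 0"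
  shows "mono_f n m w = cnj (w $ k) * mono_f n (m(k := m k - 1)) w"
proof -
  have e: "cnj (w $ k) ^ m k = cnj (w $ k) * cnj (w $ k) ^ (m k - 1)"
    using assms by (metis Suc_pred' not_gr_zero power_Suc)
  show ?thesis unfolding mono_upd_m mono_remove[of n m w k] e by (simp add: algebra_simps)
qed

lemma w_comp:
  assumes "S ** A = mat 1"
  shows "w $ h = (\<Sum>k\<in>UNIV. S $ h $ k * Aw A w k)"
proof -
  have "w = S *v (A *v w)" by (simp add: matrix_vector_mul_assoc assms)
  then have "w $ h = (S *v (A *v w)) $ h" by simp
  also have "\<dots> = (\<Sum>k\<in>UNIV. S $ h $ k * Aw A w k)"
    by (simp add: matrix_vector_mult_def Aw_def)
  finally show ?thesis .
qed

lemma cnj_comp: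
  assumes "A ** S = mat 1"
  shows "cnj (w $ k) = (\<Sum>h\<in>UNIV. wA A w h * S $ h $ k)"
proof -
  have "(\<Sum>h\<in>UNIV. wA A w h * S $ h $ k) = (\<Sum>i\<in>UNIV. cnj (w $ i) * (\<Sum>h\<in>UNIV. A $ i $ h * S $ h $ k))"
    unfolding wA_def sum_distrib_right sum_distrib_left
    by (subst sum.swap) (simp add: mult.assoc)
  also have "\<dots> = (\<Sum>i\<in>UNIV. cnj (w $ i) * (A ** S) $ i $ k)"
    by (simp add: matrix_matrix_mult_def)
  also have "\<dots> = (\<Sum>i\<in>UNIV. if i = k then cnj (w $ i) else 0)"
    unfolding assms by (rule sum.cong) (auto simp: mat_def)
  also have "\<dots> = cnj (w $ k)" by simp
  finally show ?thesis by simp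
qed

context coercive
begin

lemma W1':
  "of_nat (m k) * (\<integral>w. mono_f n (m(k := m k - 1)) w * gE A w \<partial>lborel)
   = (\<integral>w. mono_f n m w * Aw A w k * gE A w \<partial>lborel)"
  using W1[of m k n] by (simp add: mult.assoc)

lemma W2':
  "of_nat (n k) * (\<integral>w. mono_f (n(k := n k - 1)) m w * gE A w \<partial>lborel)
   = (\<integral>w. mono_f n m w * wA A w k * gE A w \<partial>lborel)"
  using W2[of n k m] by (simp add: mult.assoc)

lemma part1:
  assumes SA: "S ** A = mat 1" and nh: "n h \<noteq> 0"
  shows "(\<integral>w. mono_f n m w * gE A w \<partial>lborel) =
    (\<Sum>k\<in>UNIV. S $ h $ k * (of_nat (m k) * (\<integral>w. mono_f (n(h := n h - 1)) (m(k := m k - 1)) w * gE A w \<partial>lborel)))"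
proof -
  let ?n = "n(h := n h - 1)"
  have "(\<integral>w. mono_f n m w * gE A w \<partial>lborel) =
      (\<integral>w. (\<Sum>k\<in>UNIV. S $ h $ k * (mono_f ?n m w * Aw A w k * gE A w)) \<partial>lborel)"
  proof (rule Bochner_Integration.integral_cong[OF refl])
    fix w
    show "mono_f n m w * gE A w = (\<Sum>k\<in>UNIV. S $ h $ k * (mono_f ?n m w * Aw A w k * gE A w))"
      unfolding mono_split_n[where n=n and h=h and m=m and w=w, OF nh] w_comp[OF SA, of w h]
      by (simp add: sum_distrib_right sum_distrib_left algebra_simps)
  qed
  also have "\<dots> = (\<Sum>k\<in>UNIV. S $ h $ k * (\<integral>w. mono_f ?n m w * Aw A w k * gE A w \<partial>lborel))"
    by (subst Bochner_Integration.integral_sum) (auto intro!: integrable_mult_right int_pb pb_mult pb_mono pb_Aw)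
  also have "\<dots> = (\<Sum>k\<in>UNIV. S $ h $ k * (of_nat (m k) * (\<integral>w. mono_f ?n (m(k := m k - 1)) w * gE A w \<partial>lborel)))"
    by (simp only: W1')
  finally show ?thesis .
qed

lemma part2:
  assumes AS: "A ** S = mat 1" and mk: "m k \<noteq> 0"
  shows "(\<integral>w. mono_f n m w * gE A w \<partial>lborel) =
    (\<Sum>h\<in>UNIV. S $ h $ k * (of_nat (n h) * (\<integral>w. mono_f (n(h := n h - 1)) (m(k := m k - 1)) w * gE A w \<partial>lborel)))"
proof -
  let ?m = "m(k := m k - 1)"
  have "(\<integral>w. mono_f n m w * gE A w \<partial>lborel) =
      (\<integral>w. (\<Sum>h\<in>UNIV. S $ h $ k * (mono_f n ?m w * wA A w h * gE A w)) \<partial>lborel)"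
  proof (rule Bochner_Integration.integral_cong[OF refl])
    fix w
    show "mono_f n m w * gE A w = (\<Sum>h\<in>UNIV. S $ h $ k * (mono_f n ?m w * wA A w h * gE A w))"
      unfolding mono_split_m[where n=n and k=k and m=m and w=w, OF mk] cnj_comp[OF AS, of w k]
      by (simp add: sum_distrib_right sum_distrib_left algebra_simps)
  qed
  also have "\<dots> = (\<Sum>h\<in>UNIV. S $ h $ k * (\<integral>w. mono_f n ?m w * wA A w h * gE A w \<partial>lborel))"
    by (subst Bochner_Integration.integral_sum) (auto intro!: integrable_mult_right int_pb pb_mult pb_mono pb_wA)
  also have "\<dots> = (\<Sum>h\<in>UNIV. S $ h $ k * (of_nat (n h) * (\<integral>w. mono_f (n(h := n h - 1)) ?m w * gE A w \<partial>lborel)))"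
    by (simp only: W2')
  finally show ?thesis .
qed

end

theorem corollary3p7:
  fixes S :: "complex^'p^'p" and n m :: "'p \<Rightarrow> nat"
  assumes "pos_def_mat S"
  shows "(\<forall>h. n h \<noteq> 0 \<longrightarrow>
            cn_moment S n m =
              (\<Sum>k\<in>{k. m k \<noteq> 0 \<and> S $ h $ k \<noteq> 0}.
                 of_nat (m k) * S $ h $ k * cn_moment S (n(h := n h - 1)) (m(k := m k - 1))))
       \<and> (\<forall>k. m k \<noteq> 0 \<longrightarrow>
            cn_moment S n m =
              (\<Sum>h\<in>{h. n h \<noteq> 0 \<and> S $ h $ k \<noteq> 0}.
                 of_nat (n h) * S $ h $ k * cn_moment S (n(h := n h - 1)) (m(k := m k - 1))))"
proof -
  let ?A = "matrix_inv S"
  obtain c where co: "coercive ?A c" using exists_coercive[OF assms] by blast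
  interpret coercive ?A c by (rule co)
  have SA: "S ** ?A = mat 1" and AS: "?A ** S = mat 1"
    using inv_props[OF pd_invertible[OF assms]] by auto
  define K where "K = complex_of_real (pi ^ CARD('p)) * det S"
  define I where "I n m = (\<integral>w. mono_f n m w * gE ?A w \<partial>lborel)" for n m
  have cm: "cn_moment S n m = I n m / K" for n m
    unfolding cn_moment_def cn_density_def I_def K_def mono_f_def gE_def
    by (simp add: times_divide_eq_right)
  show ?thesis
  proof (intro conjI allI impI)
    fix h assume nh: "n h \<noteq> 0"
    have "cn_moment S n m = (\<Sum>k\<in>UNIV. of_nat (m k) * S $ h $ k * cn_moment S (n(h := n h - 1)) (m(k := m k - 1)))"
      unfolding cm using part1[where S=S and n=n and h=h and m=m, OF SA nh] unfolding I_def[symmetric]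
      by (simp add: sum_divide_distrib algebra_simps)
    also have "\<dots> = (\<Sum>k\<in>{k. m k \<noteq> 0 \<and> S $ h $ k \<noteq> 0}. of_nat (m k) * S $ h $ k * cn_moment S (n(h := n h - 1)) (m(k := m k - 1)))"
      by (rule sum.mono_neutral_right) auto
    finally show "cn_moment S n m = (\<Sum>k\<in>{k. m k \<noteq> 0 \<and> S $ h $ k \<noteq> 0}. of_nat (m k) * S $ h $ k * cn_moment S (n(h := n h - 1)) (m(k := m k - 1)))" .
  next
    fix k assume mk: "m k \<noteq> 0"
    have "cn_moment S n m = (\<Sum>h\<in>UNIV. of_nat (n h) * S $ h $ k * cn_moment S (n(h := n h - 1)) (m(k := m k - 1)))"
      unfolding cm using part2[where S=S and n=n and k=k and m=m, OF AS mk] unfolding I_def[symmetric]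
      by (simp add: sum_divide_distrib algebra_simps)
    also have "\<dots> = (\<Sum>h\<in>{h. n h \<noteq> 0 \<and> S $ h $ k \<noteq> 0}. of_nat (n h) * S $ h $ k * cn_moment S (n(h := n h - 1)) (m(k := m k - 1)))"
      by (rule sum.mono_neutral_right) auto
    finally show "cn_moment S n m = (\<Sum>h\<in>{h. n h \<noteq> 0 \<and> S $ h $ k \<noteq> 0}. of_nat (n h) * S $ h $ k * cn_moment S (n(h := n h - 1)) (m(k := m k - 1)))" .
  qed
qed

end
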